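(* Let $F$ be a complete, algebraically closed non-Archimedean valued field with absolute value $|\cdot|$, and let $f=\sum_j f_jX^j\in F[[X,X^{-1}]]$ be a non-zero Laurent series with $|f_j|\to0$ as $|j|\to\infty$. Let $k_1,k_2\in\mathbb{Z}$, not both zero, and let $B\in\mathbb{Z}_{>0}$ with $|k_1|,|k_2|\le B$. Then for any $b\in F$ with $|b|=1$, the Laurent series $$a(X):=f(X^{k_1})-bX^{k_2}$$ is either identically zero or has at most $c_fB$ zeroes (counted with multiplicity) of absolute value $1$ in $F$, where the constant $c_f$ is defined as follows: (i) if $|f|_1>1$, then $c_f=K(f,1)-k(f,1)$; (ii) if $|f|_1<1$, then $c_f=0$; (iii) if $|f|_1=1$ and $K(f,1)\neq k(f,1)$, then $c_f=2\max(|K(f,1)|,|k(f,1)|)$; (iv) if $|f|_1=1$ and $K(f,1)=k(f,1)$, then $c_f=2\max(|K(f,1)|,1)$ if $\tilde f=0$, and $c_f=2\max(|K(f,1)|,|K(\tilde f,1)|,|k(\tilde f,1)|,1)$ otherwise, where $\tilde f:=\sum_{j\neq k(f,1)} f_jX^j$.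
   Context: For a Laurent series $g=\sum_n g_nX^n$ with $|g_n|\to 0$ as $|n|\to\infty$, define $|g|_1:=\sup_{n}|g_n|$, $K(g,1):=\sup\{n\in\mathbb{Z}: |g_n|=|g|_1\}$ and $k(g,1):=\inf\{n\in\mathbb{Z}: |g_n|=|g|_1\}$ (the largest and smallest index of a coefficient of maximal absolute value). *)

theory Defs
  imports Complex_Main "HOL-Computational_Algebra.Polynomial"
begin

definition nonarch_abs :: "('a::field \<Rightarrow> real) \<Rightarrow> bool" where
  "nonarch_abs av \<longleftrightarrow>
     (\<forall>x. av x \<ge> 0) \<and> (\<forall>x. av x = 0 \<longleftrightarrow> x = 0) \<and>
     (\<forall>x y. av (x * y) = av x * av y) \<and>
     (\<forall>x y. av (x + y) \<le> max (av x) (av y))"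

definition av_conv :: "('a::field \<Rightarrow> real) \<Rightarrow> (nat \<Rightarrow> 'a) \<Rightarrow> 'a \<Rightarrow> bool" where
  "av_conv av s L \<longleftrightarrow> (\<lambda>n. av (s n - L)) \<longlonglongrightarrow> 0"

definition av_cauchy :: "('a::field \<Rightarrow> real) \<Rightarrow> (nat \<Rightarrow> 'a) \<Rightarrow> bool" where
  "av_cauchy av s \<longleftrightarrow> (\<forall>e>0. \<exists>N. \<forall>m\<ge>N. \<forall>n\<ge>N. av (s m - s n) < e)"

definition av_complete :: "('a::field \<Rightarrow> real) \<Rightarrow> bool" where
  "av_complete av \<longleftrightarrow> (\<forall>s. av_cauchy av s \<longrightarrow> (\<exists>L. av_conv av s L))"

definition alg_closed_field :: "'a::field itself \<Rightarrow> bool" where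
  "alg_closed_field _ \<longleftrightarrow> (\<forall>p :: 'a poly. degree p \<ge> 1 \<longrightarrow> (\<exists>x. poly p x = 0))"

section \<open>Laurent series (coefficient functions \<open>int \<Rightarrow> 'a\<close>)\<close>

definition restricted :: "('a::field \<Rightarrow> real) \<Rightarrow> (int \<Rightarrow> 'a) \<Rightarrow> bool" where
  "restricted av g \<longleftrightarrow>
     ((\<lambda>n. av (g n)) \<longlongrightarrow> 0) at_top \<and> ((\<lambda>n. av (g n)) \<longlongrightarrow> 0) at_bot"

definition leval :: "('a::field \<Rightarrow> real) \<Rightarrow> (int \<Rightarrow> 'a) \<Rightarrow> 'a \<Rightarrow> 'a" where
  "leval av g x = (THE L. av_conv av (\<lambda>N. \<Sum>j\<in>{-int N..int N}. g j * x powi j) L)"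

definition lsubst :: "('a::field \<Rightarrow> real) \<Rightarrow> (int \<Rightarrow> 'a) \<Rightarrow> int \<Rightarrow> (int \<Rightarrow> 'a)" where
  "lsubst av f k n =
     (if k = 0 then (if n = 0 then leval av f 1 else 0)
      else if k dvd n then f (n div k) else 0)"

text \<open>Coefficients of (X - z)^m * g (a finite convolution).\<close>
definition lin_pow_mult :: "'a::field \<Rightarrow> nat \<Rightarrow> (int \<Rightarrow> 'a) \<Rightarrow> (int \<Rightarrow> 'a)" where
  "lin_pow_mult z m g n = (\<Sum>i\<le>m. of_nat (m choose i) * (- z) ^ (m - i) * g (n - int i))"

definition zmult :: "('a::field \<Rightarrow> real) \<Rightarrow> (int \<Rightarrow> 'a) \<Rightarrow> 'a \<Rightarrow> nat" where
  "zmult av a z = (GREATEST m. \<exists>g. restricted av g \<and> a = lin_pow_mult z m g)"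

definition gauss1 :: "('a::field \<Rightarrow> real) \<Rightarrow> (int \<Rightarrow> 'a) \<Rightarrow> real" where
  "gauss1 av g = (SUP n. av (g n))"

definition Kmax :: "('a::field \<Rightarrow> real) \<Rightarrow> (int \<Rightarrow> 'a) \<Rightarrow> int" where
  "Kmax av g = (GREATEST n. av (g n) = gauss1 av g)"

definition kmin :: "('a::field \<Rightarrow> real) \<Rightarrow> (int \<Rightarrow> 'a) \<Rightarrow> int" where
  "kmin av g = (LEAST n. av (g n) = gauss1 av g)"

definition cconst :: "('a::field \<Rightarrow> real) \<Rightarrow> (int \<Rightarrow> 'a) \<Rightarrow> int" where
  "cconst av f =
    (let K = Kmax av f; k = kmin av f; ft = f(k := 0) in
     if gauss1 av f > 1 then K - k
     else if gauss1 av f < 1 then 0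
     else if K \<noteq> k then 2 * max \<bar>K\<bar> \<bar>k\<bar>
     else if ft = (\<lambda>_. 0) then 2 * max \<bar>K\<bar> 1
     else 2 * max (max \<bar>K\<bar> \<bar>Kmax av ft\<bar>) (max \<bar>kmin av ft\<bar> 1))"

end

theory Submission
  imports Defs
begin


locale NA =
  fixes av :: "'a::field \<Rightarrow> real"
  assumes na: "nonarch_abs av"
begin

lemma av_nonneg[simp]: "av x \<ge> 0" using na unfolding nonarch_abs_def by auto
lemma av_zero_iff[simp]: "av x = 0 \<longleftrightarrow> x = 0" using na unfolding nonarch_abs_def by auto
lemma av_mult: "av (x * y) = av x * av y" using na unfolding nonarch_abs_def by auto
lemma av_add: "av (x + y) \<le> max (av x) (av y)" using na unfolding nonarch_abs_def by auto

lemma av_0[simp]: "av 0 = 0" by simp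

lemma av_one[simp]: "av 1 = 1"
proof -
  have "av 1 = av 1 * av 1" using av_mult[of 1 1] by simp
  moreover have "av 1 \<noteq> 0" by simp
  ultimately show ?thesis by simp
qed

lemma av_minus[simp]: "av (- x) = av x"
proof -
  have "av (-1) * av (-1) = 1" using av_mult[of "-1" "-1"] by simp
  then have "(av (-1))\<^sup>2 = 1" by (simp add: power2_eq_square)
  then have "av (-1) = 1 \<or> av (-1) = -1" by (simp add: power2_eq_1_iff)
  then have "av (-1) = 1" using av_nonneg[of "-1"] by linarith
  then show ?thesis using av_mult[of "-1" x] by simp
qed

lemma av_diff: "av (x - y) \<le> max (av x) (av y)"
  using av_add[of x "-y"] by simp

lemma av_diff_sym: "av (x - y) = av (y - x)"
  by (metis av_minus minus_diff_eq)

lemma av_strict: assumes "av x < av y" shows "av (x + y) = av y"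
proof -
  have "av (x + y) \<le> av y" using av_add[of x y] assms by simp
  moreover have "av y \<le> max (av (x + y)) (av x)" using av_add[of "x + y" "-x"] by simp
  ultimately show ?thesis using assms by linarith
qed

lemma av_strict2: "av x < av y \<Longrightarrow> av (y + x) = av y"
  using av_strict by (simp add: add.commute)
lemma av_strict3: "av x < av y \<Longrightarrow> av (y - x) = av y"
  using av_strict2[of "-x" y] by simp
lemma av_strict4: "av x < av y \<Longrightarrow> av (x - y) = av y"
  using av_strict3 av_diff_sym by metis

lemma av_power: "av (x ^ n) = av x ^ n"
  by (induction n) (simp_all add: av_mult)

lemma av_inverse: "av (inverse x) = inverse (av x)"
proof (cases "x = 0")
  case False
  then have "av x * av (inverse x) = 1" using av_mult[of x "inverse x"] by simp
  then show ?thesis using \<open>x \<noteq> 0\<close> by (simp add: field_simps eq_divide_eq)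
qed simp

lemma av_powi1: "av z = 1 \<Longrightarrow> av (z powi j) = 1"
  by (simp add: power_int_def av_power av_inverse)

lemma av_divide: "av (x / y) = av x / av y"
  by (simp add: divide_inverse av_mult av_inverse)

lemma av_sum_le:
  assumes "\<And>i. i \<in> A \<Longrightarrow> av (f i) \<le> e" and "0 \<le> e"
  shows "av (sum f A) \<le> e"
  using assms
proof (induction A rule: infinite_finite_induct)
  case (insert x F)
  then have "av (f x) \<le> e" "av (sum f F) \<le> e" by auto
  then show ?case using av_add[of "f x" "sum f F"] by (simp add: insert.hyps)
qed simp_all

lemma av_sum_less:
  assumes "finite A" "A \<noteq> {}" "\<And>i. i \<in> A \<Longrightarrow> av (f i) < e"
  shows "av (sum f A) < e"
  using assms
proof (induction A rule: finite_ne_induct)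
  case (insert x F)
  then have "av (f x) < e" "av (sum f F) < e" by auto
  then show ?case using av_add[of "f x" "sum f F"] by (simp add: insert.hyps)
qed simp

lemma tendsto0_iff: "((\<lambda>n. av (g n)) \<longlongrightarrow> 0) F \<longleftrightarrow> (\<forall>e>0. eventually (\<lambda>n. av (g n) < e) F)"
  unfolding tendsto_iff dist_real_def by simp

lemma restricted_iff:
  "restricted av g \<longleftrightarrow> (\<forall>e>0. \<exists>M. \<forall>n. M \<le> \<bar>n\<bar> \<longrightarrow> av (g n) < e)"
proof
  assume r: "restricted av g"
  show "\<forall>e>0. \<exists>M. \<forall>n. M \<le> \<bar>n\<bar> \<longrightarrow> av (g n) < e"
  proof (intro allI impI)
    fix e :: real assume e: "e > 0"
    from r e obtain N1 where N1: "\<forall>n\<ge>N1. av (g n) < e"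
      unfolding restricted_def tendsto0_iff eventually_at_top_linorder by blast
    from r e obtain N2 where N2: "\<forall>n\<le>N2. av (g n) < e"
      unfolding restricted_def tendsto0_iff eventually_at_bot_linorder by blast
    show "\<exists>M. \<forall>n. M \<le> \<bar>n\<bar> \<longrightarrow> av (g n) < e"
      apply (rule exI[of _ "max \<bar>N1\<bar> \<bar>N2\<bar>"])
      using N1 N2 by (smt (verit))
  qed
next
  assume h: "\<forall>e>0. \<exists>M. \<forall>n. M \<le> \<bar>n\<bar> \<longrightarrow> av (g n) < e"
  show "restricted av g"
    unfolding restricted_def tendsto0_iff eventually_at_top_linorder eventually_at_bot_linorder
  proof (intro conjI allI impI)
    fix e :: real assume "e > 0"
    then obtain M where M: "\<forall>n. M \<le> \<bar>n\<bar> \<longrightarrow> av (g n) < e" using h by blast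
    show "\<exists>N. \<forall>n\<ge>N. av (g n) < e" using M by (metis abs_ge_self order_trans abs_of_nonneg)
    show "\<exists>N. \<forall>n\<le>N. av (g n) < e" apply (rule exI[of _ "-\<bar>M\<bar>"]) using M by (smt (verit))
  qed
qed

lemma restrictedD: "restricted av g \<Longrightarrow> e > 0 \<Longrightarrow> \<exists>M\<ge>0. \<forall>n. M \<le> \<bar>n\<bar> \<longrightarrow> av (g n) < e"
  unfolding restricted_iff by (metis abs_ge_zero abs_ge_self order_trans linorder_le_cases)

lemma restrictedI: "(\<And>e. e > 0 \<Longrightarrow> \<exists>M. \<forall>n. M \<le> \<bar>n\<bar> \<longrightarrow> av (g n) < e) \<Longrightarrow> restricted av g"
  unfolding restricted_iff by blast

lemma restricted_diff: "restricted av u \<Longrightarrow> restricted av v \<Longrightarrow> restricted av (\<lambda>n. u n - v n)"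
proof (rule restrictedI)
  fix e :: real assume "restricted av u" "restricted av v" "e > 0"
  then obtain M1 M2 where "\<forall>n. M1 \<le> \<bar>n\<bar> \<longrightarrow> av (u n) < e" "\<forall>n. M2 \<le> \<bar>n\<bar> \<longrightarrow> av (v n) < e"
    unfolding restricted_iff by meson
  then show "\<exists>M. \<forall>n. M \<le> \<bar>n\<bar> \<longrightarrow> av (u n - v n) < e"
    by (intro exI[of _ "max M1 M2"]) (smt (verit) av_diff)
qed

lemma restricted_scale: "restricted av u \<Longrightarrow> restricted av (\<lambda>n. c * u n)"
  unfolding restricted_def av_mult
  by (auto intro: tendsto_mult_right_zero)

lemma gauss_char: "(\<And>n. av (g n) \<le> G) \<Longrightarrow> av (g n0) = G \<Longrightarrow> gauss1 av g = G"
  unfolding gauss1_def by (rule cSup_eq_maximum) auto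

lemma Kmax_char: "gauss1 av g = G \<Longrightarrow> av (g K) = G \<Longrightarrow> (\<And>n. av (g n) = G \<Longrightarrow> n \<le> K) \<Longrightarrow> Kmax av g = K"
  unfolding Kmax_def by (rule Greatest_equality) auto

lemma kmin_char: "gauss1 av g = G \<Longrightarrow> av (g k) = G \<Longrightarrow> (\<And>n. av (g n) = G \<Longrightarrow> k \<le> n) \<Longrightarrow> kmin av g = k"
  unfolding kmin_def by (rule Least_equality) auto

lemma gauss_attained:
  assumes r: "restricted av g" and nz: "g \<noteq> (\<lambda>_. 0)"
  shows "\<exists>n0. (\<forall>n. av (g n) \<le> av (g n0)) \<and> av (g n0) > 0"
proof -
  from nz obtain n1 where n1: "g n1 \<noteq> 0" by auto
  define e where "e = av (g n1)"
  have e: "e > 0" using n1 e_def av_nonneg[of "g n1"] av_zero_iff[of "g n1"] by linarith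
  obtain M where M: "\<forall>n. M \<le> \<bar>n\<bar> \<longrightarrow> av (g n) < e" using r e unfolding restricted_iff by blast
  define A where "A = {-M..M}"
  have n1A: "n1 \<in> A" using M e_def A_def by (smt (verit) atLeastAtMost_iff)
  have fin: "finite ((\<lambda>n. av (g n)) ` A)" using A_def by simp
  have "Max ((\<lambda>n. av (g n)) ` A) \<in> (\<lambda>n. av (g n)) ` A" using fin n1A by (intro Max_in) auto
  then obtain n0 where n0: "n0 \<in> A" "av (g n0) = Max ((\<lambda>n. av (g n)) ` A)" by auto
  have le: "\<And>n. n \<in> A \<Longrightarrow> av (g n) \<le> av (g n0)" using n0 fin by auto
  have "e \<le> av (g n0)" using le[OF n1A] e_def by simp
  moreover have "\<And>n. av (g n) \<le> av (g n0)"
  proof -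
    fix n show "av (g n) \<le> av (g n0)"
    proof (cases "n \<in> A")
      case True then show ?thesis using le by simp
    next
      case False then have "M \<le> \<bar>n\<bar>" using A_def by auto
      then show ?thesis using M \<open>e \<le> av (g n0)\<close> by (meson less_le_trans less_imp_le)
    qed
  qed
  ultimately show ?thesis using e by (intro exI[of _ n0]) auto
qed

lemma gauss_props:
  assumes r: "restricted av g" and nz: "g \<noteq> (\<lambda>_. 0)"
  shows "gauss1 av g > 0" "\<And>n. av (g n) \<le> gauss1 av g"
    "av (g (Kmax av g)) = gauss1 av g" "\<And>n. av (g n) = gauss1 av g \<Longrightarrow> n \<le> Kmax av g"
    "av (g (kmin av g)) = gauss1 av g" "\<And>n. av (g n) = gauss1 av g \<Longrightarrow> kmin av g \<le> n"
    "kmin av g \<le> Kmax av g"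
proof -
  obtain n0 where n0: "\<forall>n. av (g n) \<le> av (g n0)" "av (g n0) > 0" using gauss_attained[OF r nz] by blast
  have G: "gauss1 av g = av (g n0)" using n0 by (intro gauss_char) auto
  show "gauss1 av g > 0" "\<And>n. av (g n) \<le> gauss1 av g" using G n0 by auto
  define S where "S = {n. av (g n) = gauss1 av g}"
  obtain M where M: "\<forall>n. M \<le> \<bar>n\<bar> \<longrightarrow> av (g n) < gauss1 av g" using r n0 G unfolding restricted_iff by auto
  have "S \<subseteq> {-M..M}" using M unfolding S_def by (smt (verit, best) atLeastAtMost_iff mem_Collect_eq subsetI)
  then have finS: "finite S" using finite_subset by blast
  have n0S: "n0 \<in> S" using G S_def by simp
  have K: "Kmax av g = Max S"
    by (rule Kmax_char[OF refl]) (use finS n0S Max_in[of S] S_def in auto)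
  have k: "kmin av g = Min S"
    by (rule kmin_char[OF refl]) (use finS n0S Min_in[of S] S_def in auto)
  show "av (g (Kmax av g)) = gauss1 av g" "av (g (kmin av g)) = gauss1 av g"
    using K k Max_in[OF finS] Min_in[OF finS] n0S S_def by auto
  show "\<And>n. av (g n) = gauss1 av g \<Longrightarrow> n \<le> Kmax av g" "\<And>n. av (g n) = gauss1 av g \<Longrightarrow> kmin av g \<le> n"
    using K k finS S_def by auto
  show "kmin av g \<le> Kmax av g" using K k finS n0S by (metis Max_ge Min_le order_trans)
qed

end


definition lop :: "'a::field \<Rightarrow> (int \<Rightarrow> 'a) \<Rightarrow> int \<Rightarrow> 'a" where
  "lop z g n = g (n - 1) - z * g n"

definition comp :: "'a::field list \<Rightarrow> (int \<Rightarrow> 'a) \<Rightarrow> int \<Rightarrow> 'a" where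
  "comp zs g = foldr lop zs g"

lemma lpm_Suc: "lin_pow_mult z (Suc m) g = lop z (lin_pow_mult z m g)"
proof
  fix n
  define c where "c = - z"
  define h where "h i = of_nat (m choose i) * c ^ (Suc m - i) * g (n - int i)" for i
  have A: "(\<Sum>i\<le>Suc m. h i) = (\<Sum>i\<le>m. h i)" by (simp add: h_def binomial_eq_0)
  have B: "c * (\<Sum>i\<le>m. of_nat (m choose i) * c ^ (m - i) * g (n - int i)) = (\<Sum>i\<le>m. h i)"
    unfolding sum_distrib_left h_def
    by (rule sum.cong) (auto simp: Suc_diff_le)
  have C: "(\<Sum>i\<le>Suc m. h i) = c ^ Suc m * g n + (\<Sum>i\<le>m. of_nat (m choose Suc i) * c ^ (m - i) * g (n - 1 - int i))"
    unfolding sum.atMost_Suc_shift h_def by (simp add: algebra_simps)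
  have D: "lin_pow_mult z (Suc m) g n = c ^ Suc m * g n +
     (\<Sum>i\<le>m. (of_nat (m choose i) + of_nat (m choose Suc i)) * c ^ (m - i) * g (n - 1 - int i))"
    unfolding lin_pow_mult_def sum.atMost_Suc_shift c_def by (simp add: algebra_simps)
  have E: "lop z (lin_pow_mult z m g) n = (\<Sum>i\<le>m. of_nat (m choose i) * c ^ (m - i) * g (n - 1 - int i))
     + c * (\<Sum>i\<le>m. of_nat (m choose i) * c ^ (m - i) * g (n - int i))"
    unfolding lop_def lin_pow_mult_def c_def by (simp add: algebra_simps)
  show "lin_pow_mult z (Suc m) g n = lop z (lin_pow_mult z m g) n"
    unfolding D E B A[symmetric] C by (simp add: algebra_simps sum.distrib)
qed

lemma lpm_funpow: "lin_pow_mult z m g = (lop z ^^ m) g"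
proof (induction m)
  case 0
  show ?case by (auto simp: lin_pow_mult_def)
next
  case (Suc m)
  then show ?case by (simp add: lpm_Suc)
qed

lemma comp_append: "comp (xs @ ys) g = comp xs (comp ys g)"
  by (simp add: comp_def)

lemma comp_replicate: "comp (replicate m w) g = (lop w ^^ m) g"
  by (induction m) (simp_all add: comp_def)

context NA begin

lemma lop_restricted:
  assumes z: "av z = 1" and r: "restricted av g" shows "restricted av (lop z g)"
proof (rule restrictedI)
  fix e :: real assume "e > 0"
  then obtain M where M: "\<forall>n. M \<le> \<bar>n\<bar> \<longrightarrow> av (g n) < e" using r unfolding restricted_iff by blast
  show "\<exists>M. \<forall>n. M \<le> \<bar>n\<bar> \<longrightarrow> av (lop z g n) < e"
  proof (intro exI[of _ "\<bar>M\<bar> + 1"] allI impI)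
    fix n :: int assume n: "\<bar>M\<bar> + 1 \<le> \<bar>n\<bar>"
    then have "av (g (n - 1)) < e" "av (g n) < e" using M by (smt (verit))+
    then show "av (lop z g n) < e" unfolding lop_def using av_diff[of "g (n - 1)" "z * g n"] z
      by (simp add: av_mult)
  qed
qed

lemma funpow_restricted: "av z = 1 \<Longrightarrow> restricted av g \<Longrightarrow> restricted av ((lop z ^^ n) g)"
  by (induction n) (simp_all add: lop_restricted)

lemma comp_restricted: "(\<forall>z\<in>set zs. av z = 1) \<Longrightarrow> restricted av g \<Longrightarrow> restricted av (comp zs g)"
  by (induction zs) (simp_all add: comp_def lop_restricted)

lemma lop_spread:
  assumes z: "av z = 1" and r: "restricted av g" and nz: "g \<noteq> (\<lambda>_. 0)"
  shows "lop z g \<noteq> (\<lambda>_. 0)" "gauss1 av (lop z g) = gauss1 av g"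
    "Kmax av (lop z g) = Kmax av g + 1" "kmin av (lop z g) = kmin av g"
proof -
  define G where "G = gauss1 av g"
  define K where "K = Kmax av g"
  define k where "k = kmin av g"
  note P = gauss_props[OF r nz, folded G_def K_def k_def]
  have lt: "av (g n) < G" if "n > K \<or> n < k" for n
    using P(2)[of n] P(4)[of n] P(6)[of n] that by fastforce
  have hz: "av (z * x) = av x" for x using z by (simp add: av_mult)
  have bound: "av (lop z g n) \<le> G" for n
    unfolding lop_def using av_diff[of "g (n - 1)" "z * g n"] P(2)[of n] P(2)[of "n-1"] hz[of "g n"]
    by simp
  have hK: "av (lop z g (K + 1)) = G"
    unfolding lop_def using av_strict3[of "z * g (K + 1)" "g K"] lt[of "K+1"] P(3) hz by simp
  have hk: "av (lop z g k) = G"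
    unfolding lop_def using av_strict4[of "g (k - 1)" "z * g k"] lt[of "k-1"] P(5) hz by simp
  have Gh: "gauss1 av (lop z g) = G" using bound hK by (rule gauss_char)
  show "gauss1 av (lop z g) = gauss1 av g" using Gh G_def by simp
  show "lop z g \<noteq> (\<lambda>_. 0)" using hK P(1) by auto
  have up: "n \<le> K + 1" if "av (lop z g n) = G" for n
  proof (rule ccontr)
    assume "\<not> n \<le> K + 1"
    then have "av (g (n - 1)) < G" "av (z * g n) < G" using lt hz by auto
    then have "av (lop z g n) < G" unfolding lop_def using av_diff[of "g (n - 1)" "z * g n"] by simp
    then show False using that by simp
  qed
  have lo: "k \<le> n" if "av (lop z g n) = G" for n
  proof (rule ccontr)
    assume "\<not> k \<le> n"
    then have "av (g (n - 1)) < G" "av (z * g n) < G" using lt hz by auto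
    then have "av (lop z g n) < G" unfolding lop_def using av_diff[of "g (n - 1)" "z * g n"] by simp
    then show False using that by simp
  qed
  show "Kmax av (lop z g) = Kmax av g + 1" using Kmax_char[OF Gh hK up] K_def by simp
  show "kmin av (lop z g) = kmin av g" using kmin_char[OF Gh hk lo] k_def by simp
qed

lemma comp_spread:
  assumes "\<forall>z\<in>set zs. av z = 1" "restricted av g" "g \<noteq> (\<lambda>_. 0)"
  shows "comp zs g \<noteq> (\<lambda>_. 0) \<and>
    Kmax av (comp zs g) - kmin av (comp zs g) = int (length zs) + (Kmax av g - kmin av g)"
  using assms
proof (induction zs)
  case Nil then show ?case by (simp add: comp_def)
next
  case (Cons z zs)
  have r: "restricted av (comp zs g)" using Cons.prems comp_restricted by simp
  have "comp (z # zs) g = lop z (comp zs g)" by (simp add: comp_def)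
  then show ?case using lop_spread[OF _ r] Cons by simp
qed

lemma lop_coprime:
  assumes "z \<noteq> w" "lop z u = lop w v" "restricted av u" "restricted av v"
  shows "\<exists>q. restricted av q \<and> u = lop w q \<and> v = lop z q"
proof -
  define q where "q n = inverse (z - w) * (u n - v n)" for n
  have rq: "restricted av q" unfolding q_def
    by (rule restricted_scale, rule restricted_diff) (use assms in auto)
  have eq: "u (n - 1) - z * u n = v (n - 1) - w * v n" for n
    using assms(2) unfolding lop_def by meson
  have zw: "z - w \<noteq> 0" using assms(1) by simp
  have "u = lop w q"
  proof
    fix n
    have "u (n - 1) - v (n - 1) = z * u n - w * v n" using eq[of n] by (simp add: algebra_simps)
    then have H: "u (n - 1) - v (n - 1) = z * u n - w * v n" .
    have "lop w q n = inverse (z - w) * ((u (n-1) - v (n-1)) - w * (u n - v n))"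
      by (simp add: lop_def q_def algebra_simps)
    also have "\<dots> = inverse (z - w) * ((z - w) * u n)"
    proof -
      have "(u (n-1) - v (n-1)) - w * (u n - v n) = (z - w) * u n" using H by (simp add: algebra_simps)
      then show ?thesis by simp
    qed
    also have "\<dots> = u n" using zw by simp
    finally show "u n = lop w q n" by simp
  qed
  moreover have "v = lop z q"
  proof
    fix n
    have "u (n - 1) - v (n - 1) = z * u n - w * v n" using eq[of n] by (simp add: algebra_simps)
    then have H: "u (n - 1) - v (n - 1) = z * u n - w * v n" .
    have "lop z q n = inverse (z - w) * ((u (n-1) - v (n-1)) - z * (u n - v n))"
      by (simp add: lop_def q_def algebra_simps)
    also have "\<dots> = inverse (z - w) * ((z - w) * v n)"
    proof -
      have "(u (n-1) - v (n-1)) - z * (u n - v n) = (z - w) * v n" using H by (simp add: algebra_simps)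
      then show ?thesis by simp
    qed
    also have "\<dots> = v n" using zw by simp
    finally show "v n = lop z q n" by simp
  qed
  ultimately show ?thesis using rq by blast
qed

lemma comp_coprime:
  assumes "\<forall>z\<in>set zs. z \<noteq> w \<and> av z = 1" "comp zs u = lop w v" "restricted av u" "restricted av v"
  shows "\<exists>q. restricted av q \<and> u = lop w q \<and> v = comp zs q"
  using assms
proof (induction zs arbitrary: v)
  case Nil
  then show ?case by (auto simp: comp_def)
next
  case (Cons z zs)
  have r: "restricted av (comp zs u)" using Cons.prems comp_restricted by simp
  have "lop z (comp zs u) = lop w v" using Cons.prems by (simp add: comp_def)
  then obtain q1 where q1: "restricted av q1" "comp zs u = lop w q1" "v = lop z q1"
    using lop_coprime[OF _ _ r Cons.prems(4)] Cons.prems(1) by auto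
  then obtain q where "restricted av q" "u = lop w q" "q1 = comp zs q"
    using Cons.IH[of q1] Cons.prems by auto
  then show ?case using q1 by (auto simp: comp_def)
qed

lemma comp_coprime_pow:
  assumes "\<forall>z\<in>set zs. z \<noteq> w \<and> av z = 1" "av w = 1" "comp zs u = (lop w ^^ n) v"
    "restricted av u" "restricted av v"
  shows "\<exists>q. restricted av q \<and> u = (lop w ^^ n) q"
  using assms
proof (induction n arbitrary: u)
  case 0
  then show ?case by auto
next
  case (Suc n)
  have "comp zs u = lop w ((lop w ^^ n) v)" using Suc.prems by simp
  then obtain q1 where q1: "restricted av q1" "u = lop w q1" "(lop w ^^ n) v = comp zs q1"
    using comp_coprime[OF Suc.prems(1) _ Suc.prems(4) funpow_restricted[OF Suc.prems(2) Suc.prems(5)]]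
    by blast
  then obtain q where "restricted av q" "q1 = (lop w ^^ n) q"
    using Suc.IH[of q1] Suc.prems by metis
  then show ?case using q1 by (auto intro!: exI[of _ q])
qed

end


definition psum :: "(int \<Rightarrow> 'a::field) \<Rightarrow> nat \<Rightarrow> 'a" where
  "psum t N = (\<Sum>j\<in>{-int N..int N}. t j)"

context NA begin

lemma conv_unique: assumes "av_conv av s L1" "av_conv av s L2" shows "L1 = L2"
proof -
  have le: "av (L1 - L2) \<le> av (s n - L2) + av (s n - L1)" for n
  proof -
    have "L1 - L2 = (s n - L2) - (s n - L1)" by simp
    then have "av (L1 - L2) \<le> max (av (s n - L2)) (av (s n - L1))" using av_diff by metis
    then show ?thesis using av_nonneg[of "s n - L2"] av_nonneg[of "s n - L1"] by linarith
  qed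
  have "(\<lambda>n. av (s n - L2) + av (s n - L1)) \<longlonglongrightarrow> 0 + 0"
    using assms unfolding av_conv_def by (intro tendsto_add)
  then have "av (L1 - L2) \<le> 0" using le by (intro LIMSEQ_le_const) auto
  then show ?thesis using av_nonneg[of "L1 - L2"] by simp
qed

lemma conv_le: assumes "av_conv av s L" "\<And>N. av (s N) \<le> c" shows "av L \<le> c"
proof -
  have c: "c \<ge> 0" using assms(2)[of 0] av_nonneg[of "s 0"] by linarith
  have le: "av L - c \<le> av (s n - L)" for n
  proof -
    have "L = (L - s n) + s n" by simp
    then have "av L \<le> max (av (L - s n)) (av (s n))" using av_add by metis
    then have "av L \<le> max (av (L - s n)) (av (s n))" by simp
    also have "\<dots> = max (av (s n - L)) (av (s n))" by (simp only: av_diff_sym[of L "s n"])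
    finally have "av L \<le> max (av (s n - L)) (av (s n))" .
    moreover have "max (av (s n - L)) (av (s n)) \<le> av (s n - L) + c"
      using c assms(2)[of n] av_nonneg[of "s n - L"] by (simp only: max.bounded_iff) (intro conjI; linarith)
    ultimately show ?thesis by linarith
  qed
  have "av L - c \<le> 0" using assms(1) le unfolding av_conv_def by (intro LIMSEQ_le_const) auto
  then show ?thesis by simp
qed

lemma conv_diff: assumes "av_conv av s L1" "av_conv av s' L2"
  shows "av_conv av (\<lambda>N. s N - s' N) (L1 - L2)"
  unfolding av_conv_def
proof (rule tendsto_sandwich[of "\<lambda>_. 0" _ _ "\<lambda>n. av (s n - L1) + av (s' n - L2)"])
  show "\<forall>\<^sub>F n in sequentially. 0 \<le> av (s n - s' n - (L1 - L2))" by simp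
  show "\<forall>\<^sub>F n in sequentially. av (s n - s' n - (L1 - L2)) \<le> av (s n - L1) + av (s' n - L2)"
  proof (rule always_eventually, rule allI)
    fix n
    have "s n - s' n - (L1 - L2) = (s n - L1) - (s' n - L2)" by simp
    then have "av (s n - s' n - (L1 - L2)) \<le> max (av (s n - L1)) (av (s' n - L2))" using av_diff by metis
    then show "av (s n - s' n - (L1 - L2)) \<le> av (s n - L1) + av (s' n - L2)"
      using av_nonneg[of "s n - L1"] av_nonneg[of "s' n - L2"] by linarith
  qed
  show "(\<lambda>n. 0::real) \<longlonglongrightarrow> 0" by simp
  show "(\<lambda>n. av (s n - L1) + av (s' n - L2)) \<longlonglongrightarrow> 0"
    using tendsto_add[OF assms[unfolded av_conv_def]] by simp
qed

lemma conv_const_ev: "(\<And>N. N \<ge> N0 \<Longrightarrow> s N = c) \<Longrightarrow> av_conv av s c"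
  unfolding av_conv_def
  by (rule tendsto_eventually) (auto simp: eventually_at_top_linorder intro!: exI[of _ N0])

lemma sym_cauchy:
  assumes small: "\<And>e. e > 0 \<Longrightarrow> \<exists>M. \<forall>j. M \<le> \<bar>j\<bar> \<longrightarrow> av (t j) < e"
  shows "av_cauchy av (psum t)"
  unfolding av_cauchy_def
proof (intro allI impI)
  fix e :: real assume e: "e > 0"
  obtain M where M: "\<forall>j. M \<le> \<bar>j\<bar> \<longrightarrow> av (t j) < e/2" using small[of "e/2"] e by auto
  have key: "av (psum t m - psum t n) \<le> e/2" if "nat M \<le> n" "n \<le> m" for m n
  proof -
    have sub: "{-int n..int n} \<subseteq> {-int m..int m}" using that by auto
    have "psum t m - psum t n = sum t ({-int m..int m} - {-int n..int n})"
      unfolding psum_def using sum_diff[of "{-int m..int m}" "{-int n..int n}" t] sub by simp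
    also have "av \<dots> \<le> e/2"
    proof (rule av_sum_le)
      fix j assume "j \<in> {-int m..int m} - {-int n..int n}"
      then have "M \<le> \<bar>j\<bar>" using that by auto
      then show "av (t j) \<le> e/2" using M by (simp add: less_imp_le)
    qed (use e in simp)
    finally show ?thesis .
  qed
  show "\<exists>N. \<forall>m\<ge>N. \<forall>n\<ge>N. av (psum t m - psum t n) < e"
  proof (intro exI[of _ "nat M"] allI impI)
    fix m n assume "nat M \<le> m" "nat M \<le> n"
    then have "av (psum t m - psum t n) \<le> e/2"
    proof (cases "n \<le> m")
      case True then show ?thesis using key \<open>nat M \<le> n\<close> by blast
    next
      case False then have "m \<le> n" by simp
      then have "av (psum t n - psum t m) \<le> e/2" using key \<open>nat M \<le> m\<close> by blast
      then show ?thesis by (simp only: av_diff_sym[of "psum t m" "psum t n"])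
    qed
    then show "av (psum t m - psum t n) < e" using e by linarith
  qed
qed

lemma sym_conv:
  assumes "av_complete av" "\<And>e. e > 0 \<Longrightarrow> \<exists>M. \<forall>j. M \<le> \<bar>j\<bar> \<longrightarrow> av (t j) < e"
  shows "av_conv av (psum t) (THE L. av_conv av (psum t) L)"
proof -
  obtain L where L: "av_conv av (psum t) L" using assms sym_cauchy unfolding av_complete_def by blast
  show ?thesis
  proof (rule theI[of _ L])
    show "av_conv av (psum t) L" by (rule L)
  next
    fix L' assume "av_conv av (psum t) L'"
    then show "L' = L" using L by (rule conv_unique)
  qed
qed

lemma zero_divides:
  assumes comp: "av_complete av" and r: "restricted av a" and z: "av z = 1"
    and zero: "leval av a z = 0"
  shows "\<exists>g. restricted av g \<and> a = lop z g"
proof -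
  have z0: "z \<noteq> 0" using z by auto
  define t where "t j = a j * z powi j" for j
  have avt: "av (t j) = av (a j)" for j unfolding t_def using av_powi1[OF z] by (simp add: av_mult)
  have smalla: "\<exists>M. \<forall>j. M \<le> \<bar>j\<bar> \<longrightarrow> av (a j) < e" if "e > 0" for e
    using r that unfolding restricted_iff by blast
  have conv0: "av_conv av (psum t) 0"
  proof -
    have "av_conv av (psum t) (THE L. av_conv av (psum t) L)"
      using sym_conv[OF comp] smalla avt by simp
    moreover have "(THE L. av_conv av (psum t) L) = 0"
      using zero unfolding leval_def psum_def t_def by simp
    ultimately show ?thesis by simp
  qed
  define tt where "tt n j = (if n < j then t j else 0)" for n j
  define T where "T n = (THE L. av_conv av (psum (tt n)) L)" for n
  have convT: "av_conv av (psum (tt n)) (T n)" for n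
    unfolding T_def
  proof (rule sym_conv[OF comp])
    fix e :: real assume "e > 0"
    then obtain M where "\<forall>j. M \<le> \<bar>j\<bar> \<longrightarrow> av (a j) < e" using smalla by blast
    then show "\<exists>M. \<forall>j. M \<le> \<bar>j\<bar> \<longrightarrow> av (tt n j) < e"
      using \<open>e > 0\<close> avt by (intro exI[of _ M]) (simp add: tt_def)
  qed
  have Tdiff: "T (n - 1) - T n = t n" for n
  proof -
    have "av_conv av (\<lambda>N. psum (tt (n-1)) N - psum (tt n) N) (T (n - 1) - T n)"
      using conv_diff[OF convT convT] .
    moreover have "av_conv av (\<lambda>N. psum (tt (n-1)) N - psum (tt n) N) (t n)"
    proof (rule conv_const_ev[of "nat \<bar>n\<bar>"])
      fix N assume N: "nat \<bar>n\<bar> \<le> N"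
      have "psum (tt (n-1)) N - psum (tt n) N = (\<Sum>j\<in>{-int N..int N}. tt (n-1) j - tt n j)"
        unfolding psum_def by (simp add: sum_subtractf)
      also have "\<dots> = (\<Sum>j\<in>{-int N..int N}. if j = n then t n else 0)"
        by (rule sum.cong) (auto simp: tt_def)
      also have "\<dots> = t n"
      proof -
        have "n \<in> {-int N..int N}" using N by auto
        then show ?thesis by (simp add: sum.delta)
      qed
      finally show "psum (tt (n-1)) N - psum (tt n) N = t n" .
    qed
    ultimately show ?thesis using conv_unique by blast
  qed
  define g where "g n = z powi (-n-1) * T n" for n
  have "a = lop z g"
  proof
    fix n
    have e1: "z * z powi (-n-1) = z powi (-n)"
      using power_int_add[of z 1 "-n-1"] z0 by simp
    have e2: "z powi (-n) * z powi n = 1"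
      using power_int_add[of z "-n" n] z0 by simp
    have "lop z g n = z powi (-n) * T (n - 1) - (z * z powi (-n-1)) * T n"
      unfolding lop_def g_def by (simp add: algebra_simps)
    also have "\<dots> = z powi (-n) * (T (n - 1) - T n)" unfolding e1 by (simp add: algebra_simps)
    also have "\<dots> = a n" unfolding Tdiff t_def using e2 by (simp add: algebra_simps)
    finally show "a n = lop z g n" by simp
  qed
  moreover have "restricted av g"
  proof (rule restrictedI)
    fix e :: real assume e: "e > 0"
    obtain M where M: "\<forall>j. M \<le> \<bar>j\<bar> \<longrightarrow> av (a j) < e/2" using smalla[of "e/2"] e by auto
    show "\<exists>M. \<forall>n. M \<le> \<bar>n\<bar> \<longrightarrow> av (g n) < e"
    proof (intro exI[of _ "\<bar>M\<bar>"] allI impI)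
      fix n :: int assume n: "\<bar>M\<bar> \<le> \<bar>n\<bar>"
      have avg: "av (g n) = av (T n)" unfolding g_def using av_powi1[OF z] by (simp add: av_mult)
      show "av (g n) < e"
      proof (cases "n \<ge> 0")
        case True
        have "av (T n) \<le> e/2"
        proof (rule conv_le[OF convT])
          fix N
          show "av (psum (tt n) N) \<le> e/2" unfolding psum_def
          proof (rule av_sum_le)
            fix j assume "j \<in> {-int N..int N}"
            show "av (tt n j) \<le> e/2"
            proof (cases "n < j")
              case True
              then have "M \<le> \<bar>j\<bar>" using n \<open>n \<ge> 0\<close> by linarith
              then show ?thesis using M True avt by (simp add: tt_def less_imp_le)
            qed (use e in \<open>simp add: tt_def\<close>)
          qed (use e in simp)
        qed
        then show ?thesis using avg e by linarith
      next
        case False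
        have "av (0 - T n) \<le> e/2"
        proof (rule conv_le[OF conv_diff[OF conv0 convT]])
          fix N
          have "psum t N - psum (tt n) N = (\<Sum>j\<in>{-int N..int N}. t j - tt n j)"
            unfolding psum_def by (simp add: sum_subtractf)
          also have "av \<dots> \<le> e/2"
          proof (rule av_sum_le)
            fix j assume "j \<in> {-int N..int N}"
            show "av (t j - tt n j) \<le> e/2"
            proof (cases "n < j")
              case False
              then have "M \<le> \<bar>j\<bar>" using n \<open>\<not> n \<ge> 0\<close> by linarith
              then show ?thesis using M False avt by (simp add: tt_def less_imp_le)
            qed (use e in \<open>simp add: tt_def\<close>)
          qed (use e in simp)
          finally show "av (psum t N - psum (tt n) N) \<le> e/2" .
        qed
        then show ?thesis using avg e by simp
      qed
    qed
  qed
  ultimately show ?thesis by blast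
qed

end


lemma lop_zero: "lop z (\<lambda>_. 0) = (\<lambda>_. 0)"
  by (auto simp: lop_def)

lemma comp_zero: "comp zs (\<lambda>_. 0) = (\<lambda>_. 0)"
  by (induction zs) (simp_all add: comp_def lop_zero)

context NA begin

lemma zmult_props:
  assumes r: "restricted av a" and nz: "a \<noteq> (\<lambda>_. 0)" and z: "av z = 1"
  shows "\<exists>g. restricted av g \<and> a = (lop z ^^ zmult av a z) g"
    and "(\<exists>g. restricted av g \<and> a = lop z g) \<Longrightarrow> zmult av a z \<ge> 1"
proof -
  define P where "P m = (\<exists>g. restricted av g \<and> a = lin_pow_mult z m g)" for m
  have bound: "m \<le> nat (Kmax av a - kmin av a)" if Pm: "P m" for m
  proof -
    obtain g where g0: "restricted av g" "a = (lop z ^^ m) g"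
      using Pm unfolding P_def lpm_funpow by blast
    then have g: "restricted av g" "a = comp (replicate m z) g" by (simp_all add: comp_replicate)
    have gnz: "g \<noteq> (\<lambda>_. 0)" using g nz comp_zero by metis
    have "Kmax av a - kmin av a = int m + (Kmax av g - kmin av g)"
      using comp_spread[of "replicate m z" g] g gnz z by simp
    moreover have "kmin av g \<le> Kmax av g" using gauss_props(7)[OF g(1) gnz] .
    ultimately show ?thesis by linarith
  qed
  have P0: "P 0" unfolding P_def lpm_funpow using r by auto
  have "P (Greatest P)" using GreatestI_nat[of P 0, OF P0 bound] .
  then show "\<exists>g. restricted av g \<and> a = (lop z ^^ zmult av a z) g"
    unfolding P_def zmult_def lpm_funpow by simp
  assume "\<exists>g. restricted av g \<and> a = lop z g"
  then have "P 1" unfolding P_def lpm_funpow by simp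
  then have "1 \<le> Greatest P" using Greatest_le_nat[of P 1, OF _ bound] by blast
  then show "zmult av a z \<ge> 1" unfolding zmult_def P_def lpm_funpow by simp
qed

lemma factor_set:
  assumes r: "restricted av a" and nz: "a \<noteq> (\<lambda>_. 0)"
    and fin: "finite S" and S: "\<forall>z\<in>S. av z = 1"
  shows "\<exists>zs g. restricted av g \<and> set zs \<subseteq> S \<and> length zs = (\<Sum>z\<in>S. zmult av a z) \<and> a = comp zs g"
  using fin S
proof (induction S rule: finite_induct)
  case empty
  then show ?case using r by (intro exI[of _ "[]"] exI[of _ a]) (auto simp: comp_def)
next
  case (insert w S)
  then obtain zs g where zs: "restricted av g" "set zs \<subseteq> S" "length zs = (\<Sum>z\<in>S. zmult av a z)" "a = comp zs g"
    by auto
  have w: "av w = 1" using insert.prems by auto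
  obtain h where h: "restricted av h" "a = (lop w ^^ zmult av a w) h" using zmult_props(1)[OF r nz w] by blast
  have zsw: "\<forall>z\<in>set zs. z \<noteq> w \<and> av z = 1" using zs(2) insert.hyps(2) insert.prems by auto
  obtain q where q: "restricted av q" "g = (lop w ^^ zmult av a w) q"
    using comp_coprime_pow[OF zsw w _ zs(1) h(1)] zs(4) h(2) by metis
  have "a = comp (zs @ replicate (zmult av a w) w) q"
    using zs(4) q(2) by (simp add: comp_append comp_replicate)
  moreover have "length (zs @ replicate (zmult av a w) w) = (\<Sum>z\<in>insert w S. zmult av a z)"
    using zs(3) insert.hyps by simp
  moreover have "set (zs @ replicate (zmult av a w) w) \<subseteq> insert w S" using zs(2) by auto
  ultimately show ?case using q(1) by blast
qed

lemma zeros_bound: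
  assumes comp: "av_complete av" and r: "restricted av a" and nz: "a \<noteq> (\<lambda>_. 0)"
  shows "finite {z. av z = 1 \<and> leval av a z = 0} \<and>
     (\<Sum>z\<in>{z. av z = 1 \<and> leval av a z = 0}. int (zmult av a z)) \<le> Kmax av a - kmin av a"
proof -
  define Z where "Z = {z. av z = 1 \<and> leval av a z = 0}"
  have m1: "zmult av a z \<ge> 1" if "z \<in> Z" for z
    using that zmult_props(2)[OF r nz] zero_divides[OF comp r] unfolding Z_def by blast
  have sb: "int (\<Sum>z\<in>S. zmult av a z) \<le> Kmax av a - kmin av a" if SS: "finite S" "S \<subseteq> Z" for S
  proof -
    obtain zs g where zs: "restricted av g" "set zs \<subseteq> S" "length zs = (\<Sum>z\<in>S. zmult av a z)" "a = comp zs g"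
      using factor_set[OF r nz SS(1)] SS(2) unfolding Z_def by blast
    have gnz: "g \<noteq> (\<lambda>_. 0)" using zs nz comp_zero by metis
    have "Kmax av a - kmin av a = int (length zs) + (Kmax av g - kmin av g)"
      using comp_spread[of zs g] zs gnz SS(2) unfolding Z_def by auto
    moreover have "kmin av g \<le> Kmax av g" using gauss_props(7)[OF zs(1) gnz] .
    ultimately show ?thesis using zs(3) by linarith
  qed
  have cardS: "card S \<le> (\<Sum>z\<in>S. zmult av a z)" if "finite S" "S \<subseteq> Z" for S
  proof -
    have "card S = (\<Sum>z\<in>S. (1::nat))" by simp
    also have "\<dots> \<le> (\<Sum>z\<in>S. zmult av a z)" using m1 that by (intro sum_mono) auto
    finally show ?thesis .
  qed
  have finZ: "finite Z"
  proof (rule ccontr)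
    assume "infinite Z"
    then obtain S where S: "finite S" "S \<subseteq> Z" "card S = Suc (nat (Kmax av a - kmin av a))"
      using infinite_arbitrarily_large by blast
    have "int (card S) \<le> Kmax av a - kmin av a" using cardS[OF S(1,2)] sb[OF S(1,2)] by linarith
    then show False using S(3) by linarith
  qed
  have "(\<Sum>z\<in>Z. int (zmult av a z)) = int (\<Sum>z\<in>Z. zmult av a z)" by simp
  then show ?thesis using sb[OF finZ] finZ unfolding Z_def by simp
qed

end


lemma mul_bound: fixes k j B X :: int
  assumes "\<bar>k\<bar> \<le> B" "\<bar>j\<bar> \<le> X" shows "\<bar>k * j\<bar> \<le> B * X"
proof -
  have "\<bar>k * j\<bar> = \<bar>k\<bar> * \<bar>j\<bar>" by (simp add: abs_mult)
  also have "\<dots> \<le> B * X" using assms by (intro mult_mono) auto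
  finally show ?thesis .
qed

context NA begin

lemma spread_by_positions:
  assumes "restricted av a" "a \<noteq> (\<lambda>_. 0)"
    "\<And>n n'. av (a n) = gauss1 av a \<Longrightarrow> av (a n') = gauss1 av a \<Longrightarrow> n - n' \<le> C"
  shows "Kmax av a - kmin av a \<le> C"
  using assms(3) gauss_props(3,5)[OF assms(1,2)] by blast

lemma restricted_upd: "restricted av f \<Longrightarrow> restricted av (f(K := 0))"
proof (rule restrictedI)
  fix e :: real assume "restricted av f" "e > 0"
  then obtain M where "\<forall>n. M \<le> \<bar>n\<bar> \<longrightarrow> av (f n) < e" unfolding restricted_iff by blast
  then show "\<exists>M. \<forall>n. M \<le> \<bar>n\<bar> \<longrightarrow> av ((f(K := 0)) n) < e" using \<open>e > 0\<close>
    by (intro exI[of _ M]) auto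
qed

lemma cconst_nonneg:
  assumes "restricted av f" "f \<noteq> (\<lambda>_. 0)" shows "cconst av f \<ge> 0"
  using gauss_props(7)[OF assms] unfolding cconst_def Let_def by auto

lemma conv_le_ev: assumes "av_conv av s L" "\<And>N. N \<ge> N0 \<Longrightarrow> av (s N) \<le> c" "c \<ge> 0" shows "av L \<le> c"
proof -
  have le: "av L - c \<le> av (s n - L)" if "n \<ge> N0" for n
  proof -
    have "L = (L - s n) + s n" by simp
    then have "av L \<le> max (av (L - s n)) (av (s n))" using av_add by metis
    also have "\<dots> = max (av (s n - L)) (av (s n))" by (simp only: av_diff_sym[of L "s n"])
    finally have "av L \<le> max (av (s n - L)) (av (s n))" .
    moreover have "max (av (s n - L)) (av (s n)) \<le> av (s n - L) + c"
      using assms(3) assms(2)[OF that] av_nonneg[of "s n - L"] by (simp only: max.bounded_iff) (intro conjI; linarith)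
    ultimately show ?thesis by linarith
  qed
  have "av L - c \<le> 0" using assms(1) le unfolding av_conv_def by (intro LIMSEQ_le_const) auto
  then show ?thesis by simp
qed

lemma conv1:
  assumes "av_complete av" "restricted av f"
  shows "av_conv av (psum f) (leval av f 1)"
proof -
  have "av_conv av (psum f) (THE L. av_conv av (psum f) L)"
    using sym_conv[OF assms(1)] assms(2) unfolding restricted_iff by blast
  moreover have "psum f = (\<lambda>N. \<Sum>j\<in>{-int N..int N}. f j * 1 powi j)" unfolding psum_def by simp
  ultimately show ?thesis unfolding leval_def by simp
qed

lemma leval1_le:
  assumes "av_complete av" "restricted av f" "f \<noteq> (\<lambda>_. 0)"
  shows "av (leval av f 1) \<le> gauss1 av f"
proof (rule conv_le[OF conv1[OF assms(1,2)]])
  fix N show "av (psum f N) \<le> gauss1 av f"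
    unfolding psum_def using gauss_props(1,2)[OF assms(2,3)] by (intro av_sum_le) (auto simp: less_imp_le)
qed

lemma ft_lt:
  assumes r: "restricted av f" and nz: "f \<noteq> (\<lambda>_. 0)" and Kk: "Kmax av f = kmin av f"
    and ftnz: "f(kmin av f := 0) \<noteq> (\<lambda>_. 0)"
  shows "gauss1 av (f(kmin av f := 0)) < gauss1 av f"
    "\<And>j. j \<noteq> kmin av f \<Longrightarrow> av (f j) < gauss1 av f"
proof -
  define K where "K = kmin av f"
  define ft where "ft = f(K := 0)"
  have rt: "restricted av ft" unfolding ft_def using restricted_upd[OF r] .
  note P = gauss_props[OF r nz]
  show lt: "\<And>j. j \<noteq> kmin av f \<Longrightarrow> av (f j) < gauss1 av f"
    using P(2) P(4) P(6) Kk by (metis antisym_conv2 order.antisym)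
  have ftnz': "ft \<noteq> (\<lambda>_. 0)" using ftnz unfolding ft_def K_def .
  note Q = gauss_props[OF rt ftnz']
  define j0 where "j0 = Kmax av ft"
  have "ft j0 \<noteq> 0" using Q(1) Q(3) j0_def by auto
  then have "j0 \<noteq> K" unfolding ft_def by auto
  then have "av (f j0) < gauss1 av f" using lt K_def by simp
  moreover have "ft j0 = f j0" using \<open>j0 \<noteq> K\<close> unfolding ft_def by simp
  ultimately show "gauss1 av (f(kmin av f := 0)) < gauss1 av f"
    using Q(3) j0_def ft_def K_def by simp
qed

lemma leval1_unique:
  assumes comp: "av_complete av" and r: "restricted av f" and nz: "f \<noteq> (\<lambda>_. 0)"
    and Kk: "Kmax av f = kmin av f"
  shows "av (leval av f 1) = gauss1 av f"
proof -
  define K where "K = kmin av f"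
  define ft where "ft = f(K := 0)"
  define s where "s = (if ft = (\<lambda>_. 0) then 0 else gauss1 av ft)"
  note P = gauss_props[OF r nz]
  have slt: "s < gauss1 av f" unfolding s_def using ft_lt[OF r nz Kk] P(1) ft_def K_def by auto
  have s0: "s \<ge> 0" unfolding s_def using gauss_props(1)[OF restricted_upd[OF r]] ft_def by (auto simp: less_imp_le)
  have fts: "av (ft j) \<le> s" for j
  proof (cases "ft = (\<lambda>_. 0)")
    case True then show ?thesis unfolding s_def by simp
  next
    case False then show ?thesis unfolding s_def
      using gauss_props(2)[OF restricted_upd[OF r] False[unfolded ft_def]] ft_def by simp
  qed
  have cv: "av_conv av (\<lambda>N. psum f N - f K) (leval av f 1 - f K)"
    using conv_diff[OF conv1[OF comp r] conv_const_ev[of 0 "\<lambda>_. f K" "f K"]] by simp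
  have "av (leval av f 1 - f K) \<le> s"
  proof (rule conv_le_ev[OF cv _ s0])
    fix N assume N: "N \<ge> nat \<bar>K\<bar>"
    have KA: "K \<in> {-int N..int N}" using N by auto
    have "psum f N = f K + sum f ({-int N..int N} - {K})"
      unfolding psum_def using sum.remove[OF _ KA, of f] by simp
    also have "sum f ({-int N..int N} - {K}) = sum ft ({-int N..int N} - {K})"
      unfolding ft_def by (rule sum.cong) auto
    finally have "psum f N - f K = sum ft ({-int N..int N} - {K})" by simp
    moreover have "av (sum ft ({-int N..int N} - {K})) \<le> s" using fts s0 by (intro av_sum_le) auto
    ultimately show "av (psum f N - f K) \<le> s" by simp
  qed
  then have "av (leval av f 1 - f K) < av (f K)" using slt P(5) K_def by simp
  then have "av ((leval av f 1 - f K) + f K) = av (f K)" by (rule av_strict)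
  then show ?thesis using P(5) K_def by simp
qed

lemma cconst_ge1:
  assumes comp: "av_complete av" and r: "restricted av f" and nz: "f \<noteq> (\<lambda>_. 0)"
    and one: "av (leval av f 1) = 1"
  shows "cconst av f \<ge> 1"
proof -
  note P = gauss_props[OF r nz]
  have "\<not> gauss1 av f < 1" using leval1_le[OF comp r nz] one by simp
  moreover have "gauss1 av f > 1 \<Longrightarrow> Kmax av f \<noteq> kmin av f"
    using leval1_unique[OF comp r nz] one by auto
  ultimately have "gauss1 av f > 1 \<and> Kmax av f \<noteq> kmin av f \<or> gauss1 av f = 1" by force
  then show ?thesis unfolding cconst_def Let_def using P(7) by auto
qed

end


context NA begin

lemma case_k0:
  assumes comp: "av_complete av" and r: "restricted av f" and nz: "f \<noteq> (\<lambda>_. 0)"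
    and k2: "k2 \<noteq> 0" "\<bar>k2\<bar> \<le> B" and B: "B > 0" and b: "av b = 1"
    and ra: "restricted av a" and anz: "a \<noteq> (\<lambda>_. 0)"
    and adef: "a = (\<lambda>n. lsubst av f 0 n - (if n = k2 then b else 0))"
  shows "Kmax av a - kmin av a \<le> cconst av f * B"
proof (rule spread_by_positions[OF ra anz])
  define c where "c = leval av f 1"
  have a0: "a 0 = c" using k2 unfolding adef lsubst_def c_def by simp
  have ak2: "a k2 = - b" using k2 unfolding adef lsubst_def by simp
  have aoth: "n \<noteq> 0 \<Longrightarrow> n \<noteq> k2 \<Longrightarrow> a n = 0" for n unfolding adef lsubst_def by simp
  note Q = gauss_props[OF ra anz]
  have cc0: "cconst av f * B \<ge> 0" using cconst_nonneg[OF r nz] B by simp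
  fix n n' assume n: "av (a n) = gauss1 av a" and n': "av (a n') = gauss1 av a"
  have pos: "m = 0 \<or> m = k2" if "av (a m) = gauss1 av a" for m
    using aoth[of m] that Q(1) by force
  show "n - n' \<le> cconst av f * B"
  proof (cases "n = n'")
    case True then show ?thesis using cc0 by simp
  next
    case False
    then have both: "av (a 0) = gauss1 av a" "av (a k2) = gauss1 av a"
      using pos[OF n] pos[OF n'] n n' by auto
    then have "av c = 1" using a0 ak2 b by simp
    then have "cconst av f \<ge> 1" using cconst_ge1[OF comp r nz] c_def by simp
    then have "B \<le> cconst av f * B" using B by simp
    moreover have "n - n' \<le> \<bar>k2\<bar>" using pos[OF n] pos[OF n'] False by auto
    ultimately show ?thesis using k2 by linarith
  qed
qed

end


context NA begin

lemma case_k1: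
  assumes comp: "av_complete av" and r: "restricted av f" and nz: "f \<noteq> (\<lambda>_. 0)"
    and k1: "k1 \<noteq> 0" "\<bar>k1\<bar> \<le> B" and k2: "\<bar>k2\<bar> \<le> B" and B: "B > 0" and b: "av b = 1"
    and ra: "restricted av a" and anz: "a \<noteq> (\<lambda>_. 0)"
    and adef: "a = (\<lambda>n. lsubst av f k1 n - (if n = k2 then b else 0))"
  shows "Kmax av a - kmin av a \<le> cconst av f * B"
proof -
  define G where "G = gauss1 av f"
  define K where "K = Kmax av f"
  define k where "k = kmin av f"
  note P = gauss_props[OF r nz, folded G_def K_def k_def]
  note Q = gauss_props[OF ra anz]
  define Ga where "Ga = gauss1 av a"
  have aj: "a (k1 * j) = f j - (if k1 * j = k2 then b else 0)" for j
    using k1 unfolding adef lsubst_def by simp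
  have andvd: "\<not> k1 dvd n \<Longrightarrow> a n = - (if n = k2 then b else 0)" for n
    using k1 unfolding adef lsubst_def by simp
  have Fle: "av (lsubst av f k1 n) \<le> G" for n
    using k1 P(1) P(2) unfolding lsubst_def by (auto simp: less_imp_le)
  have bnd: "av (a n) \<le> max G 1" for n
  proof -
    have "av (a n) \<le> max (av (lsubst av f k1 n)) (av (if n = k2 then b else 0))"
      unfolding adef by (rule av_diff)
    moreover have "av (if n = k2 then b else 0) \<le> 1" using b by simp
    ultimately show ?thesis using Fle[of n] by (simp add: max_def split: if_splits)
  qed
  have dvdpos: "\<exists>j. n = k1 * j" if "av (a n) = Ga" "n \<noteq> k2" for n
  proof (rule ccontr)
    assume "\<nexists>j. n = k1 * j"
    then have "\<not> k1 dvd n" by auto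
    then have "a n = 0" using andvd that(2) by simp
    then show False using that(1) Q(1) Ga_def by simp
  qed
  have cc0: "cconst av f * B \<ge> 0" using cconst_nonneg[OF r nz] B by simp
  consider "G > 1" | "G < 1" | "G = 1" by linarith
  then show ?thesis
  proof cases
    case 1
    have cc: "cconst av f = K - k" using 1 unfolding cconst_def Let_def G_def K_def k_def by simp
    have bd: "av (a n) \<le> G" for n using bnd[of n] 1 by simp
    have att: "av (a (k1 * K)) = G"
    proof (cases "k1 * K = k2")
      case True
      then have "a (k1 * K) = f K - b" using aj[of K] by simp
      moreover have "av (f K - b) = G" using av_strict3[of b "f K"] P(3) b 1 by simp
      ultimately show ?thesis by simp
    qed (use aj P(3) in simp)
    have GG: "Ga = G" unfolding Ga_def using bd att by (rule gauss_char)
    have pos: "\<exists>j. n = k1 * j \<and> k \<le> j \<and> j \<le> K" if "av (a n) = Ga" for n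
    proof -
      have "k1 dvd n"
      proof (rule ccontr)
        assume "\<not> k1 dvd n"
        then have "av (a n) \<le> 1" using andvd[of n] b by simp
        then show False using that GG 1 by simp
      qed
      then obtain j where j: "n = k1 * j" by blast
      have "av (f j) = G"
      proof (rule ccontr)
        assume "av (f j) \<noteq> G"
        then have "av (f j) < G" using P(2)[of j] by simp
        moreover have "av (a n) \<le> max (av (f j)) (av (if n = k2 then b else 0))"
          using aj[of j] j av_diff by metis
        moreover have "av (if n = k2 then b else 0) < G" using b 1 by simp
        ultimately have "av (a n) < G" by simp
        then show False using that GG by simp
      qed
      then show ?thesis using j P(4) P(6) by blast
    qed
    show ?thesis
    proof (rule spread_by_positions[OF ra anz])
      fix n n' assume "av (a n) = gauss1 av a" "av (a n') = gauss1 av a"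
      then obtain j j' where jj: "n = k1 * j" "k \<le> j" "j \<le> K" "n' = k1 * j'" "k \<le> j'" "j' \<le> K"
        using pos Ga_def by metis
      have "\<bar>j - j'\<bar> \<le> K - k" using jj by linarith
      then have "\<bar>k1 * (j - j')\<bar> \<le> B * (K - k)" using mul_bound k1(2) by blast
      moreover have "n - n' = k1 * (j - j')" using jj by (simp add: algebra_simps)
      ultimately show "n - n' \<le> cconst av f * B" using cc by (simp add: mult.commute)
    qed
  next
    case 2
    have cc: "cconst av f = 0" using 2 unfolding cconst_def Let_def G_def by simp
    have bd: "av (a n) \<le> 1" for n using bnd[of n] 2 by simp
    have att: "av (a k2) = 1"
    proof -
      have "a k2 = lsubst av f k1 k2 - b" unfolding adef by simp
      moreover have "av (lsubst av f k1 k2) < av b" using Fle[of k2] 2 b by simp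
      ultimately show ?thesis using av_strict4 b by simp
    qed
    have GG: "Ga = 1" unfolding Ga_def using bd att by (rule gauss_char)
    have pos: "n = k2" if "av (a n) = Ga" for n
    proof (rule ccontr)
      assume "n \<noteq> k2"
      then have "a n = lsubst av f k1 n" unfolding adef by simp
      then have "av (a n) < 1" using Fle[of n] 2 by simp
      then show False using that GG by simp
    qed
    show ?thesis
      by (rule spread_by_positions[OF ra anz]) (use pos Ga_def cc in auto)
  next
    case 3
    have G1: "G = 1" using 3 .
    have bd: "av (a n) \<le> 1" for n using bnd[of n] 3 by simp
    show ?thesis
    proof (cases "K = k")
      case False
      define M where "M = max \<bar>K\<bar> \<bar>k\<bar>"
      have cc: "cconst av f = 2 * M" using 3 False unfolding cconst_def Let_def G_def K_def k_def M_def by simp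
      have M1: "M \<ge> 1" using False M_def by linarith
      have att: "\<exists>n0. av (a n0) = 1"
      proof (cases "k1 * K = k2")
        case True
        then have "k1 * k \<noteq> k2" using False k1(1) by auto
        then show ?thesis using aj[of k] P(5) 3 by (intro exI[of _ "k1 * k"]) simp
      next
        case False
        then show ?thesis using aj[of K] P(3) 3 by (intro exI[of _ "k1 * K"]) simp
      qed
      then have GG: "Ga = 1" unfolding Ga_def using bd gauss_char by metis
      have pos: "\<bar>n\<bar> \<le> B * M" if nat: "av (a n) = Ga" for n
      proof (cases "n = k2")
        case True
        then show ?thesis using k2 M1 B by (smt (verit) mult_le_cancel_left1)
      next
        case False
        then obtain j where j: "n = k1 * j" using dvdpos nat by blast
        then have "a n = f j" using aj False by simp
        then have "av (f j) = G" using nat GG 3 by simp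
        then have "k \<le> j" "j \<le> K" using P(4) P(6) by auto
        then have "\<bar>j\<bar> \<le> M" unfolding M_def by linarith
        then show ?thesis using mul_bound k1(2) j by blast
      qed
      show ?thesis
      proof (rule spread_by_positions[OF ra anz])
        fix n n' assume "av (a n) = gauss1 av a" "av (a n') = gauss1 av a"
        then have "\<bar>n\<bar> \<le> B * M" "\<bar>n'\<bar> \<le> B * M" using pos Ga_def by auto
        then show "n - n' \<le> cconst av f * B" using cc by (simp add: algebra_simps)
      qed
    next
      case True
      define ft where "ft = f(k := 0)"
      define X where "X = (if ft = (\<lambda>_. 0) then max \<bar>K\<bar> 1
          else max (max \<bar>K\<bar> \<bar>Kmax av ft\<bar>) (max \<bar>kmin av ft\<bar> 1))"
      have cc: "cconst av f = 2 * X" using 3 True unfolding cconst_def Let_def G_def K_def k_def X_def ft_def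
        by simp
      have X1: "X \<ge> 1" "X \<ge> \<bar>K\<bar>" unfolding X_def by auto
      have rft: "restricted av ft" unfolding ft_def using restricted_upd[OF r] .
      have pos: "\<bar>n\<bar> \<le> B * X" if nat: "av (a n) = Ga" for n
      proof -
        consider "n = k2" | "n = k1 * K" | "n \<noteq> k2" "n \<noteq> k1 * K" by blast
        then show ?thesis
        proof cases
          case 1
          then show ?thesis using k2 X1 B by (smt (verit) mult_le_cancel_left1)
        next
          case 2
          then show ?thesis using mul_bound k1(2) X1(2) by blast
        next
          case 3
          then obtain j where j: "n = k1 * j" using dvdpos nat by blast
          then have jK: "j \<noteq> K" using 3 by auto
          have an: "a n = f j" using aj j 3 by simp
          have ftj: "ft j = f j" using jK True unfolding ft_def by simp
          have "av (f j) = Ga" using an nat by simp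
          then have fj0: "f j \<noteq> 0" using Q(1) Ga_def by auto
          then have ftnz: "ft \<noteq> (\<lambda>_. 0)" using ftj by (metis)
          note R = gauss_props[OF rft ftnz]
          define j0 where "j0 = Kmax av ft"
          have "ft j0 \<noteq> 0" using R(1) R(3) j0_def by auto
          then have j0K: "j0 \<noteq> K" using True unfolding ft_def by auto
          have ftj0: "ft j0 = f j0" using j0K True unfolding ft_def by simp
          have "gauss1 av ft \<le> Ga"
          proof (cases "k1 * j0 = k2")
            case False
            then have "a (k1 * j0) = ft j0" using aj ftj0 by simp
            then show ?thesis using Q(2)[of "k1 * j0"] R(3) j0_def Ga_def by simp
          next
            case True
            then have "k1 * K \<noteq> k2" using j0K k1(1) by auto
            then have "a (k1 * K) = f K" using aj by simp
            then have "Ga \<ge> 1" using Q(2)[of "k1 * K"] P(3) G1 Ga_def by simp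
            moreover have "gauss1 av ft \<le> 1" using R(3) ftj0 P(2)[of j0] G1 j0_def by simp
            ultimately show ?thesis by simp
          qed
          then have "av (ft j) = gauss1 av ft" using R(2)[of j] ftj an nat by simp
          then have "kmin av ft \<le> j" "j \<le> Kmax av ft" using R(4) R(6) by auto
          then have "\<bar>j\<bar> \<le> X" using ftnz unfolding X_def by auto
          then show ?thesis using mul_bound k1(2) j by blast
        qed
      qed
      show ?thesis
      proof (rule spread_by_positions[OF ra anz])
        fix n n' assume "av (a n) = gauss1 av a" "av (a n') = gauss1 av a"
        then have "\<bar>n\<bar> \<le> B * X" "\<bar>n'\<bar> \<le> B * X" using pos Ga_def by auto
        then show "n - n' \<le> cconst av f * B" using cc by (simp add: algebra_simps)
      qed
    qed
  qed
qed

end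


context NA begin

lemma restricted_a:
  assumes r: "restricted av f" and adef: "a = (\<lambda>n. lsubst av f k1 n - (if n = k2 then b else 0))"
  shows "restricted av a"
proof (cases "k1 = 0")
  case True
  show ?thesis
  proof (rule restrictedI)
    fix e :: real assume e: "e > 0"
    show "\<exists>M. \<forall>n. M \<le> \<bar>n\<bar> \<longrightarrow> av (a n) < e"
    proof (intro exI[of _ "\<bar>k2\<bar> + 1"] allI impI)
      fix n :: int assume "\<bar>k2\<bar> + 1 \<le> \<bar>n\<bar>"
      then have "n \<noteq> 0" "n \<noteq> k2" by auto
      then show "av (a n) < e" using e True unfolding adef lsubst_def by simp
    qed
  qed
next
  case False
  show ?thesis
  proof (rule restrictedI)
    fix e :: real assume e: "e > 0"
    obtain Mf where Mf: "Mf \<ge> 0" "\<forall>n. Mf \<le> \<bar>n\<bar> \<longrightarrow> av (f n) < e" using restrictedD[OF r e] by blast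
    show "\<exists>M. \<forall>n. M \<le> \<bar>n\<bar> \<longrightarrow> av (a n) < e"
    proof (intro exI[of _ "\<bar>k1\<bar> * Mf + \<bar>k2\<bar> + 1"] allI impI)
      fix n :: int assume n: "\<bar>k1\<bar> * Mf + \<bar>k2\<bar> + 1 \<le> \<bar>n\<bar>"
      have k1M: "\<bar>k1\<bar> * Mf \<ge> 0" using Mf by simp
      then have nk2: "n \<noteq> k2" using n by auto
      show "av (a n) < e"
      proof (cases "k1 dvd n")
        case True
        then obtain j where j: "n = k1 * j" by blast
        have "Mf \<le> \<bar>j\<bar>"
        proof (rule ccontr)
          assume "\<not> Mf \<le> \<bar>j\<bar>"
          then have "\<bar>j\<bar> \<le> Mf" by simp
          then have "\<bar>k1\<bar> * \<bar>j\<bar> \<le> \<bar>k1\<bar> * Mf" by (intro mult_left_mono) auto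
          then have "\<bar>n\<bar> \<le> \<bar>k1\<bar> * Mf" using j by (simp add: abs_mult)
          then show False using n by simp
        qed
        then have "av (f j) < e" using Mf by simp
        moreover have "a n = f j" using j nk2 False unfolding adef lsubst_def by simp
        ultimately show ?thesis by simp
      next
        case dv: False
        then show ?thesis using nk2 e False unfolding adef lsubst_def by simp
      qed
    qed
  qed
qed

end

theorem mainTheorem2:
  fixes av :: "'a::field \<Rightarrow> real" and f :: "int \<Rightarrow> 'a"
    and k1 k2 B :: int and b :: 'a
  assumes "nonarch_abs av" and "av_complete av" and "alg_closed_field TYPE('a)"
    and "restricted av f" and "f \<noteq> (\<lambda>_. 0)"
    and "k1 \<noteq> 0 \<or> k2 \<noteq> 0" and "B > 0" and "\<bar>k1\<bar> \<le> B" and "\<bar>k2\<bar> \<le> B"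
    and "av b = 1"
  defines "a \<equiv> (\<lambda>n. lsubst av f k1 n - (if n = k2 then b else 0))"
  shows "a = (\<lambda>_. 0) \<or>
    (finite {z. av z = 1 \<and> leval av a z = 0} \<and>
     (\<Sum>z\<in>{z. av z = 1 \<and> leval av a z = 0}. int (zmult av a z)) \<le> cconst av f * B)"
proof (cases "a = (\<lambda>_. 0)")
  case True then show ?thesis by simp
next
  case False
  interpret NA av using assms(1) by unfold_locales
  have ra: "restricted av a" using restricted_a[OF assms(4)] a_def by simp
  have zb: "finite {z. av z = 1 \<and> leval av a z = 0} \<and>
     (\<Sum>z\<in>{z. av z = 1 \<and> leval av a z = 0}. int (zmult av a z)) \<le> Kmax av a - kmin av a"
    using zeros_bound[OF assms(2) ra False] .
  have "Kmax av a - kmin av a \<le> cconst av f * B"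
  proof (cases "k1 = 0")
    case True
    then show ?thesis using case_k0[OF assms(2,4,5) _ assms(9,7,10) ra False] assms(6) a_def by simp
  next
    case k1: False
    then show ?thesis using case_k1[OF assms(2,4,5) k1 assms(8,9,7,10) ra False] a_def by simp
  qed
  then show ?thesis using zb by linarith
qed

end
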